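(* Let $(R,\mathfrak{m})$ be a commutative Artinian local ring with identity and $\mathfrak{m}\neq0$. If $f\in R[x]$ is a regular polynomial of degree $n$, then $L(f)\subseteq\{1,2,\dots,n\}$.
   Context: A polynomial is regular if not all of its coefficients lie in $\mathfrak{m}$. A nonunit polynomial is irreducible if in any factorization into two polynomials one factor is a unit of $R[x]$ (a polynomial $a_0+\dots+a_dx^d$ is a unit iff $a_0$ is a unit and $a_i\in\mathfrak{m}$ for $i>0$). A positive integer $k$ is a length of $f$ if $f$ is a product of $k$ irreducible polynomials of $R[x]$; $L(f)$ denotes the set of lengths of $f$. *)

theory Defs
  imports "HOL-Computational_Algebra.Polynomial" "HOL-Computational_Algebra.Factorial_Ring"
begin

definition is_ideal :: "'a::comm_ring_1 set \<Rightarrow> bool" where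
  "is_ideal I \<longleftrightarrow> 0 \<in> I \<and> (\<forall>x\<in>I. \<forall>y\<in>I. x + y \<in> I) \<and> (\<forall>x\<in>I. \<forall>r. r * x \<in> I)"

definition maximal_ideal :: "'a::comm_ring_1 set \<Rightarrow> bool" where
  "maximal_ideal M \<longleftrightarrow> is_ideal M \<and> M \<noteq> UNIV \<and>
     (\<forall>J. is_ideal J \<and> M \<subseteq> J \<longrightarrow> J = M \<or> J = UNIV)"

definition local_ring_with :: "'a::comm_ring_1 set \<Rightarrow> bool" where
  "local_ring_with M \<longleftrightarrow> maximal_ideal M \<and> (\<forall>J. maximal_ideal J \<longrightarrow> J = M)"

definition artinian :: "'a::comm_ring_1 itself \<Rightarrow> bool" where
  "artinian _ \<longleftrightarrow> (\<forall>I :: nat \<Rightarrow> 'a set. (\<forall>n. is_ideal (I n)) \<and> (\<forall>n. I (Suc n) \<subseteq> I n)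
      \<longrightarrow> (\<exists>N. \<forall>n\<ge>N. I n = I N))"

definition regular_poly :: "'a::comm_ring_1 set \<Rightarrow> 'a poly \<Rightarrow> bool" where
  "regular_poly M f \<longleftrightarrow> (\<exists>i. coeff f i \<notin> M)"

definition lengths :: "'a::comm_ring_1 poly \<Rightarrow> nat set" where
  "lengths f = {k. k > 0 \<and> (\<exists>fs. length fs = k \<and> (\<forall>g\<in>set fs. irreducible g) \<and> prod_list fs = f)}"

end

theory Submission
  imports Defs
begin

lemma ideal_one_UNIV: "is_ideal I \<Longrightarrow> 1 \<in> I \<Longrightarrow> I = UNIV"
  unfolding is_ideal_def by (metis UNIV_eq_I mult.right_neutral)

lemma ideal_neg: "is_ideal I \<Longrightarrow> a \<in> I \<Longrightarrow> - a \<in> I"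
  unfolding is_ideal_def by (metis mult_minus1)

lemma ideal_diff: "is_ideal I \<Longrightarrow> a \<in> I \<Longrightarrow> b \<in> I \<Longrightarrow> a - b \<in> I"
  using ideal_neg[of I b] unfolding is_ideal_def by (metis diff_conv_add_uminus)

lemma ideal_mult: "is_ideal I \<Longrightarrow> a \<in> I \<Longrightarrow> a * r \<in> I"
  unfolding is_ideal_def by (metis mult.commute)

lemma ideal_sum: "is_ideal I \<Longrightarrow> (\<And>i. i \<in> S \<Longrightarrow> f i \<in> I) \<Longrightarrow> sum f S \<in> I"
proof (induction S rule: infinite_finite_induct)
  case (infinite A) then show ?case by (simp add: is_ideal_def)
next
  case empty then show ?case by (simp add: is_ideal_def)
next
  case (insert x F) then show ?case by (simp add: is_ideal_def)
qed

lemma nonunit_in_M: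
  fixes M :: "'a::comm_ring_1 set"
  assumes loc: "local_ring_with M" and nu: "\<not> x dvd 1"
  shows "x \<in> M"
proof -
  define A where "A = {J::'a set. is_ideal J \<and> x \<in> J \<and> 1 \<notin> J}"
  define P where "P = {r * x | r. True}"
  have "is_ideal P"
    unfolding P_def is_ideal_def
    by (auto simp: distrib_right[symmetric] mult.assoc[symmetric]) (metis mult_zero_left)
  moreover have "x \<in> P" unfolding P_def by (metis (mono_tags, lifting) mem_Collect_eq mult_1)
  moreover have "1 \<notin> P" unfolding P_def using nu by (auto, metis dvd_triv_right)
  ultimately have PA: "P \<in> A" unfolding A_def by blast
  have "\<forall>C\<in>chains A. \<exists>U\<in>A. \<forall>X\<in>C. X \<subseteq> U"
  proof
    fix C assume C: "C \<in> chains A"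
    show "\<exists>U\<in>A. \<forall>X\<in>C. X \<subseteq> U"
    proof (cases "C = {}")
      case True then show ?thesis using PA by blast
    next
      case False
      have CA: "C \<subseteq> A" and ch: "\<forall>X\<in>C. \<forall>Y\<in>C. X \<subseteq> Y \<or> Y \<subseteq> X"
        using C unfolding chains_def chain_subset_def by auto
      have "\<Union>C \<in> A"
        unfolding A_def is_ideal_def
      proof (intro CollectI conjI ballI allI)
        show "0 \<in> \<Union>C" using False CA unfolding A_def is_ideal_def by blast
        show "x \<in> \<Union>C" using False CA unfolding A_def by blast
        show "1 \<notin> \<Union>C" using CA unfolding A_def by blast
        fix a r assume "a \<in> \<Union>C" then show "r * a \<in> \<Union>C" using CA unfolding A_def is_ideal_def by blast
      next
        fix a b assume a: "a \<in> \<Union>C" and b: "b \<in> \<Union>C"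
        then obtain X Y where X: "X \<in> C" "a \<in> X" and Y: "Y \<in> C" "b \<in> Y" by blast
        show "a + b \<in> \<Union>C"
        proof (cases "X \<subseteq> Y")
          case True then show ?thesis using X Y CA unfolding A_def is_ideal_def by blast
        next
          case False then have "Y \<subseteq> X" using ch X Y by blast
          then show ?thesis using X Y CA unfolding A_def is_ideal_def by blast
        qed
      qed
      then show ?thesis by blast
    qed
  qed
  from Zorn_Lemma2[OF this] obtain J where JA: "J \<in> A" and Jmax: "\<forall>X\<in>A. J \<subseteq> X \<longrightarrow> X = J" by blast
  have "maximal_ideal J"
    unfolding maximal_ideal_def
  proof (intro conjI allI impI)
    show "is_ideal J" using JA A_def by auto
    show "J \<noteq> UNIV" using JA A_def by auto
    fix K assume K: "is_ideal K \<and> J \<subseteq> K"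
    show "K = J \<or> K = UNIV"
    proof (cases "1 \<in> K")
      case True then show ?thesis using K ideal_one_UNIV by blast
    next
      case False then have "K \<in> A" using K JA A_def by auto
      then show ?thesis using Jmax K by blast
    qed
  qed
  then have "J = M" using loc unfolding local_ring_with_def by blast
  then show ?thesis using JA A_def by auto
qed


lemma M_basic:
  assumes "local_ring_with M" shows "is_ideal M" "1 \<notin> M"
  using assms ideal_one_UNIV unfolding local_ring_with_def maximal_ideal_def by blast+

lemma notin_M_unit: "local_ring_with M \<Longrightarrow> x \<notin> M \<Longrightarrow> x dvd 1"
  using nonunit_in_M by blast

lemma M_prime:
  assumes loc: "local_ring_with M" and a: "a \<notin> M" and b: "b \<notin> M"
  shows "a * b \<notin> M"
proof
  assume ab: "a * b \<in> M"
  have "a * b dvd 1 * 1" using mult_dvd_mono[OF notin_M_unit[OF loc a] notin_M_unit[OF loc b]] .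
  then have "a * b dvd 1" by simp
  then obtain c where c1: "1 = a * b * c" by (rule dvdE)
  have "1 \<in> M" unfolding c1 by (rule ideal_mult[OF M_basic(1)[OF loc] ab])
  then show False using M_basic(2)[OF loc] by blast
qed

lemma M_nilpotent:
  fixes M :: "'a::comm_ring_1 set"
  assumes art: "artinian TYPE('a)" and loc: "local_ring_with M" and aM: "a \<in> M"
  shows "\<exists>N. a ^ N = 0"
proof -
  define I where "I n = {a ^ n * r | r. True}" for n
  have "is_ideal (I n)" for n
    unfolding I_def is_ideal_def
  proof (intro conjI ballI allI)
    show "0 \<in> {a ^ n * r |r. True}" by (metis (mono_tags, lifting) mem_Collect_eq mult_zero_right)
    fix x y assume "x \<in> {a ^ n * r |r. True}" "y \<in> {a ^ n * r |r. True}"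
    then show "x + y \<in> {a ^ n * r |r. True}" by (auto simp: distrib_left[symmetric])
  next
    fix x t assume "x \<in> {a ^ n * r |r. True}"
    then obtain r where "x = a ^ n * r" by blast
    then have "t * x = a ^ n * (t * r)" by (simp add: mult.left_commute)
    then show "t * x \<in> {a ^ n * r |r. True}" by blast
  qed
  then have "\<forall>n. is_ideal (I n)" by blast
  moreover have "\<forall>n. I (Suc n) \<subseteq> I n"
  proof (intro allI subsetI)
    fix n x assume "x \<in> I (Suc n)"
    then obtain r where "x = a ^ Suc n * r" unfolding I_def by blast
    then have "x = a ^ n * (a * r)" by (simp add: mult.assoc mult.commute)
    then show "x \<in> I n" unfolding I_def by blast
  qed
  ultimately have "(\<forall>n. is_ideal (I n)) \<and> (\<forall>n. I (Suc n) \<subseteq> I n)" by (rule conjI)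
  moreover have "(\<forall>n. is_ideal (I n)) \<and> (\<forall>n. I (Suc n) \<subseteq> I n) \<longrightarrow> (\<exists>N. \<forall>n\<ge>N. I n = I N)"
    using art unfolding artinian_def by (rule spec)
  ultimately have "\<exists>N. \<forall>n\<ge>N. I n = I N" by (rule rev_mp)
  then obtain N where NN: "\<forall>n\<ge>N. I n = I N" by (rule exE)
  have "N \<le> Suc N" by simp
  then have "I (Suc N) = I N" using NN by blast
  moreover have "a ^ N \<in> I N" unfolding I_def by (metis (mono_tags, lifting) mem_Collect_eq mult_1_right)
  ultimately have "a ^ N \<in> I (Suc N)" by (simp only:)
  then obtain r where r: "a ^ N = a ^ Suc N * r" unfolding I_def by blast
  have "a ^ N * (1 - a * r) = a ^ N - a ^ Suc N * r" by (simp add: algebra_simps)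
  also have "\<dots> = 0" unfolding r[symmetric] by simp
  finally have e: "a ^ N * (1 - a * r) = 0" .
  have "1 - a * r \<notin> M"
  proof
    assume "1 - a * r \<in> M"
    moreover have "a * r \<in> M" using ideal_mult[OF M_basic(1)[OF loc] aM] .
    ultimately have "(1 - a * r) + a * r \<in> M" using M_basic(1)[OF loc] unfolding is_ideal_def by blast
    then show False using M_basic(2)[OF loc] by simp
  qed
  then have "(1 - a * r) dvd 1" using notin_M_unit[OF loc] by blast
  then obtain c where c: "1 = (1 - a * r) * c" by (rule dvdE)
  have "a ^ N = a ^ N * ((1 - a * r) * c)" by (simp flip: c)
  also have "\<dots> = (a ^ N * (1 - a * r)) * c" by (simp only: mult.assoc)
  also have "\<dots> = 0" by (simp only: e mult_zero_left)
  finally show ?thesis by blast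
qed

lemma nilpotent_add:
  fixes x y :: "'a::comm_ring_1"
  assumes "x ^ m = 0" "y ^ n = 0"
  shows "(x + y) ^ (m + n) = 0"
proof -
  have "(x + y) ^ (m + n) = (\<Sum>k\<le>m+n. of_nat ((m+n) choose k) * x ^ k * y ^ (m + n - k))"
    by (rule binomial_ring)
  also have "\<dots> = 0"
  proof (rule sum.neutral, rule ballI)
    fix k assume "k \<in> {..m+n}"
    show "of_nat ((m+n) choose k) * x ^ k * y ^ (m + n - k) = 0"
    proof (cases "m \<le> k")
      case True
      then have "x ^ k = x ^ m * x ^ (k - m)" by (metis le_add_diff_inverse power_add)
      then show ?thesis using assms by simp
    next
      case False
      then have "y ^ (m + n - k) = y ^ n * y ^ (m - k)"
        by (metis add.commute add_diff_assoc nat_le_linear power_add)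
      then show ?thesis using assms by simp
    qed
  qed
  finally show ?thesis .
qed

lemma poly_nilpotent:
  fixes p :: "'a::comm_ring_1 poly"
  assumes "\<And>i. \<exists>N. coeff p i ^ N = 0"
  shows "\<exists>N. p ^ N = 0"
  using assms
proof (induction p rule: pCons_induct)
  case 0 show ?case by (intro exI[of _ 1]) simp
next
  case (pCons a q)
  obtain N where N: "q ^ N = 0" using pCons.IH pCons.prems by (metis coeff_pCons_Suc)
  obtain K where K: "a ^ K = 0" using pCons.prems[of 0] by auto
  have e: "pCons a q = [:a:] + q * [:0, 1:]" by (simp add: mult.commute)
  have "[:a:] ^ K = 0" using K by (simp add: poly_const_pow)
  moreover have "(q * [:0, 1:]) ^ N = 0" by (simp only: power_mult_distrib N mult_zero_left)
  ultimately have "([:a:] + q * [:0, 1:]) ^ (K + N) = 0" by (rule nilpotent_add)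
  then show ?case using e by metis
qed

lemma unit_plus_nilpotent:
  fixes u z :: "'a::comm_ring_1"
  assumes u: "u dvd 1" and z: "z ^ N = 0"
  shows "(u + z) dvd 1"
proof -
  obtain v where uv: "1 = u * v" using u by (auto elim: dvdE)
  define w where "w = - (v * z)"
  have "w ^ N = 0" unfolding w_def using z power_minus[of "v * z" N] by (simp add: power_mult_distrib)
  then have "1 = (1 - w) * (\<Sum>i<N. w ^ i)" using one_diff_power_eq[of w N] by simp
  then have "(1 - w) dvd 1" by (metis dvd_triv_left)
  moreover have "u + z = u * (1 - w)"
  proof -
    have "u * (1 - w) = u + (u * v) * z" unfolding w_def by (simp add: algebra_simps)
    also have "\<dots> = u + z" by (simp flip: uv)
    finally show ?thesis by simp
  qed
  ultimately show ?thesis using mult_dvd_mono[OF u, of "1 - w" 1] by simp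
qed

lemma poly_unit_crit:
  fixes M :: "'a::comm_ring_1 set" and g :: "'a poly"
  assumes art: "artinian TYPE('a)" and loc: "local_ring_with M"
    and g0: "coeff g 0 \<notin> M" and gi: "\<And>i. i > 0 \<Longrightarrow> coeff g i \<in> M"
  shows "g dvd 1"
proof -
  define h where "h = g - [:coeff g 0:]"
  have "\<And>i. \<exists>N. coeff h i ^ N = 0"
  proof -
    fix i show "\<exists>N. coeff h i ^ N = 0"
    proof (cases "i = 0")
      case True then show ?thesis unfolding h_def by (intro exI[of _ 1]) simp
    next
      case False
      then have "coeff h i = coeff g i" unfolding h_def by (simp add: coeff_pCons split: nat.split)
      then show ?thesis using M_nilpotent[OF art loc gi[of i]] False by simp
    qed
  qed
  then obtain N where N: "h ^ N = 0" using poly_nilpotent by blast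
  obtain c where c: "1 = coeff g 0 * c" using notin_M_unit[OF loc g0] by (auto elim: dvdE)
  have "[:coeff g 0:] * [:c:] = 1" proof -
    have c': "c * coeff g 0 = 1" by (metis c mult.commute)
    show ?thesis by (simp add: one_pCons c')
  qed
  then have "[:coeff g 0:] dvd 1" by (metis dvd_triv_left)
  from unit_plus_nilpotent[OF this N] show ?thesis unfolding h_def by simp
qed

lemma nonregular_mult:
  assumes "is_ideal M" "\<forall>i. coeff g i \<in> M"
  shows "coeff (g * h) i \<in> M"
  unfolding coeff_mult using assms
  by (intro ideal_sum) (auto intro: ideal_mult)

lemma key_coeff:
  fixes M :: "'a::comm_ring_1 set"
  assumes loc: "local_ring_with M"
    and p1: "coeff p i \<notin> M" and p2: "\<And>a. a > i \<Longrightarrow> coeff p a \<in> M"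
    and q1: "coeff q j \<notin> M" and q2: "\<And>b. b > j \<Longrightarrow> coeff q b \<in> M"
  shows "coeff (p * q) (i + j) \<notin> M"
proof
  assume H: "coeff (p * q) (i + j) \<in> M"
  have I: "is_ideal M" using M_basic[OF loc] by blast
  define S where "S = (\<Sum>a\<in>{..i+j} - {i}. coeff p a * coeff q (i + j - a))"
  have "coeff (p * q) (i + j) = coeff p i * coeff q (i + j - i) + (\<Sum>a\<in>{..i+j} - {i}. coeff p a * coeff q (i + j - a))"
    unfolding coeff_mult by (rule sum.remove) auto
  then have T: "coeff (p * q) (i + j) = coeff p i * coeff q j + S" unfolding S_def by simp
  have "(\<Sum>a\<in>{..i+j} - {i}. coeff p a * coeff q (i + j - a)) \<in> M"
  proof (rule ideal_sum[OF I])
    fix a assume a: "a \<in> {..i+j} - {i}"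
    show "coeff p a * coeff q (i + j - a) \<in> M"
    proof (cases "a > i")
      case True then show ?thesis using p2 ideal_mult[OF I] by presburger
    next
      case False then have "i + j - a > j" using a by auto
      then have "coeff q (i + j - a) \<in> M" by (rule q2)
      then have "coeff q (i + j - a) * coeff p a \<in> M" by (rule ideal_mult[OF I])
      then show ?thesis by (simp add: mult.commute)
    qed
  qed
  then have SM: "S \<in> M" unfolding S_def .
  have "coeff (p * q) (i + j) - S \<in> M" by (rule ideal_diff[OF I H SM])
  then have "coeff p i * coeff q j \<in> M" unfolding T by simp
  then show False using M_prime[OF loc p1 q1] by blast
qed

definition rd :: "'a::comm_ring_1 set \<Rightarrow> 'a poly \<Rightarrow> nat" where
  "rd M p = (GREATEST i. coeff p i \<notin> M)"

lemma rd_props: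
  assumes loc: "local_ring_with M" and reg: "regular_poly M p"
  shows "coeff p (rd M p) \<notin> M" "\<And>a. a > rd M p \<Longrightarrow> coeff p a \<in> M" "rd M p \<le> degree p"
    "\<And>k. coeff p k \<notin> M \<Longrightarrow> k \<le> rd M p"
proof -
  obtain i where i: "coeff p i \<notin> M" using reg unfolding regular_poly_def by blast
  have z: "0 \<in> M" using M_basic(1)[OF loc] unfolding is_ideal_def by blast
  have b: "\<And>y. coeff p y \<notin> M \<Longrightarrow> y \<le> degree p"
    using z by (metis le_degree)
  show c: "coeff p (rd M p) \<notin> M" unfolding rd_def by (rule GreatestI_nat[where P="\<lambda>i. coeff p i \<notin> M", OF i b])
  show "\<And>k. coeff p k \<notin> M \<Longrightarrow> k \<le> rd M p" unfolding rd_def by (rule Greatest_le_nat[where P="\<lambda>i. coeff p i \<notin> M", OF _ b])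
  then show "\<And>a. a > rd M p \<Longrightarrow> coeff p a \<in> M" by force
  show "rd M p \<le> degree p" using b c .
qed

lemma main_ind:
  fixes M :: "'a::comm_ring_1 set"
  assumes art: "artinian TYPE('a)" and loc: "local_ring_with M"
  shows "(\<forall>g\<in>set fs. irreducible g) \<Longrightarrow> regular_poly M (prod_list fs) \<Longrightarrow> length fs \<le> rd M (prod_list fs)"
proof (induction fs)
  case Nil then show ?case by simp
next
  case (Cons g gs)
  define P where "P = prod_list gs"
  have I: "is_ideal M" using M_basic[OF loc] by blast
  have f: "prod_list (g # gs) = g * P" unfolding P_def by simp
  have rg: "regular_poly M g"
    using Cons.prems(2) nonregular_mult[OF I] unfolding f regular_poly_def by blast
  have rP: "regular_poly M P"
    using Cons.prems(2) nonregular_mult[OF I, of P g] unfolding f regular_poly_def by (metis mult.commute)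
  have IH: "length gs \<le> rd M P" using Cons P_def rP by simp
  have "rd M g \<ge> 1"
  proof (rule ccontr)
    assume "\<not> 1 \<le> rd M g"
    then have "rd M g = 0" by simp
    then have "g dvd 1"
      using rd_props[OF loc rg] by (intro poly_unit_crit[OF art loc]) auto
    then show False using Cons.prems(1) by (simp add: irreducible_def)
  qed
  moreover have "coeff (g * P) (rd M g + rd M P) \<notin> M"
    using rd_props[OF loc rg] rd_props[OF loc rP] by (intro key_coeff[OF loc]) auto
  then have "rd M g + rd M P \<le> rd M (g * P)"
    using rd_props(4)[OF loc Cons.prems(2)[unfolded f]] by blast
  ultimately show ?case using IH f by simp
qed

theorem lemma4p3:
  fixes M :: "'a::comm_ring_1 set" and f :: "'a poly" and n :: nat
  assumes "artinian TYPE('a)"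
    and "local_ring_with M"
    and "M \<noteq> {0}"
    and "regular_poly M f"
    and "degree f = n"
  shows "lengths f \<subseteq> {1..n}"
proof
  fix k assume "k \<in> lengths f"
  then obtain fs where k: "k > 0" "length fs = k" "\<forall>g\<in>set fs. irreducible g" "prod_list fs = f"
    unfolding lengths_def by blast
  have "k \<le> rd M f" using main_ind[OF assms(1,2) k(3)] k assms(4) by simp
  also have "\<dots> \<le> n" using rd_props(3)[OF assms(2,4)] assms(5) by simp
  finally show "k \<in> {1..n}" using k by simp
qed

end
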